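(* Let $p\in\mathbb{C}[z,z^{-1}]$ be non-zero. If $\operatorname{wd}(p)=0$, then $F(r_p^{(2)})(\lambda)=0$ for all $0\le\lambda<|\operatorname{lead}(p)|$ and $F(r_p^{(2)})(\lambda)=1$ for all $\lambda\ge|\operatorname{lead}(p)|$. If $\operatorname{wd}(p)\ge1$, then \[ F\bigl(r_p^{(2)}\bigr)(\lambda)\le\frac{8\sqrt3}{\sqrt{47}}\cdot\operatorname{wd}(p)\cdot\left(\frac{\lambda}{|\operatorname{lead}(p)|}\right)^{\frac{1}{\operatorname{wd}(p)}}\quad\text{for all }\lambda\in[0,\infty). \]
   Context: For non-zero $p=\sum_{n=n^-}^{n^+}c_nz^n\in\mathbb{C}[z,z^{-1}]$ with $c_{n^-}\neq0\neq c_{n^+}$, the width is $\operatorname{wd}(p)=n^+-n^-$ and the leading coefficient is $\operatorname{lead}(p)=c_{n^+}$. The operator $r_p^{(2)}\colon L^2(\mathbb{Z})\to L^2(\mathbb{Z})$ is multiplication by $p$, with spectral density function $F(r_p^{(2)})(\lambda)=\mu_{S^1}\bigl(\{z\in S^1:|p(z)|\le\lambda\}\bigr)$, $\mu_{S^1}$ the normalized Haar measure. *)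

theory Defs
  imports "HOL-Analysis.Analysis"
begin

text \<open>A Laurent polynomial p = sum_n c_n z^n in C[z,z^-1] is represented by its
 finitely supported coefficient function c :: int => complex.\<close>

definition laurent_poly :: "(int \<Rightarrow> complex) \<Rightarrow> bool" where
  "laurent_poly c \<longleftrightarrow> finite {n. c n \<noteq> 0}"

definition lsupp :: "(int \<Rightarrow> complex) \<Rightarrow> int set" where
  "lsupp c = {n. c n \<noteq> 0}"

definition ldeg_max :: "(int \<Rightarrow> complex) \<Rightarrow> int" where
  "ldeg_max c = Max (lsupp c)"

definition ldeg_min :: "(int \<Rightarrow> complex) \<Rightarrow> int" where
  "ldeg_min c = Min (lsupp c)"

definition wd :: "(int \<Rightarrow> complex) \<Rightarrow> nat" where
  "wd c = nat (ldeg_max c - ldeg_min c)"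

definition lead :: "(int \<Rightarrow> complex) \<Rightarrow> complex" where
  "lead c = c (ldeg_max c)"

definition leval :: "(int \<Rightarrow> complex) \<Rightarrow> complex \<Rightarrow> complex" where
  "leval c z = (\<Sum>n\<in>lsupp c. c n * z powi n)"

text \<open>Spectral density function of r_p^(2):
  F(lambda) = mu_{S^1}({z in S^1. |p(z)| <= lambda}), where the normalized Haar
  measure on S^1 is the push-forward of Lebesgue measure on [0,1] under
  t |-> exp(2 pi i t).\<close>
definition spec_density :: "(int \<Rightarrow> complex) \<Rightarrow> real \<Rightarrow> real" where
  "spec_density c l =
     measure lborel {t \<in> {0..1::real}. cmod (leval c (cis (2 * pi * t))) \<le> l}"

end

theory Submission
  imports Defs "HOL-Computational_Algebra.Fundamental_Theorem_Algebra"
begin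

lemma cos_lower: "1 - u^2/2 \<le> cos (u::real)"
proof -
  have "cos u = 1 - 2 * sin (u/2)^2" using cos_double_sin[of "u/2"] by simp
  moreover have "sin (u/2)^2 \<le> (u/2)^2"
    using abs_sin_x_le_abs_x[of "u/2"] by (metis abs_ge_zero power2_abs power_mono)
  ultimately show ?thesis by (simp add: power_divide)
qed

lemma fact3: "fact 3 = (6::real)"
proof -
  have "(3::nat) = Suc (Suc (Suc 0))" by simp
  hence "fact 3 = (fact (Suc (Suc (Suc 0))) :: real)" by metis
  also have "\<dots> = 6" by simp
  finally show ?thesis .
qed

lemma sin_lower3: assumes "0 \<le> y" shows "(y::real) - y^3/6 \<le> sin y"
proof -
  have 1: "\<bar>sin y - (\<Sum>m<3. sin_coeff m * y ^ m)\<bar> \<le> inverse (fact 3) * \<bar>y\<bar> ^ 3"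
    using Maclaurin_sin_bound[of y 3] .
  have 2: "(\<Sum>m<3. sin_coeff m * y ^ m) = y"
  proof -
    have "{..<3::nat} = {0,1,2}" by auto
    thus ?thesis by (simp add: sin_coeff_def)
  qed
  have i: "inverse (fact 3 :: real) = 1/6" by (simp only: fact3) simp
  have 3: "inverse (fact 3) * \<bar>y\<bar> ^ 3 = y^3 / (6::real)"
    unfolding i using assms by simp
  have "\<bar>sin y - y\<bar> \<le> y^3/6" using 1 unfolding 2 3 .
  from abs_le_D2[OF this] show ?thesis by linarith
qed
lemma jordan:
  assumes "0 \<le> y" "y \<le> pi/2"
  shows "2 * y / pi \<le> sin y"
proof (cases "y \<le> 1")
  case True
  have "y * y \<le> 1" using True assms by (simp add: mult_le_one)
  hence "y * y * y \<le> 1 * y" using assms(1) by (rule mult_right_mono)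
  hence "y^3 \<le> y * 1" by (simp add: power3_eq_cube)
  have "2 * y / pi \<le> 2 * y / 3" using assms pi_gt3
    by (intro divide_left_mono) auto
  also have "\<dots> \<le> y - y^3/6" using \<open>y^3 \<le> y * 1\<close> assms(1) by linarith
  also have "\<dots> \<le> sin y" using assms(1) by (rule sin_lower3)
  finally show ?thesis .
next
  case False
  define u where "u = pi/2 - y"
  have u0: "0 \<le> u" "u \<le> 1" using assms False pi_less_4 by (auto simp: u_def)
  have "sin y = cos u" by (simp add: u_def cos_diff)
  have "2 * y / pi = 1 - 2 * u / pi" unfolding u_def using pi_gt3 by (simp add: field_simps)
  also have "\<dots> \<le> 1 - u^2/2"
  proof -
    have "u^2 \<le> u" using u0 by (simp add: power2_eq_square mult_left_le)
    moreover have "pi * u \<le> 4 * u" using u0 pi_less_4 by (intro mult_right_mono) auto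
    hence "u / 2 \<le> 2 * u / pi" using pi_gt3
      by (simp add: field_simps) 
    ultimately show ?thesis by linarith
  qed
  also have "\<dots> \<le> cos u" by (rule cos_lower)
  finally show ?thesis using \<open>sin y = cos u\<close> by simp
qed
lemma chord: "cmod (cis a - cis b) = 2 * \<bar>sin ((a - b)/2)\<bar>"
proof -
  have "(cmod (cis a - cis b))^2 = (cos a - cos b)^2 + (sin a - sin b)^2"
    by (simp add: cmod_power2)
  also have "\<dots> = 2 - 2 * cos (a - b)"
  proof -
    have "(cos a - cos b)^2 + (sin a - sin b)^2 = (sin a ^2 + cos a^2) + (sin b^2 + cos b^2) - 2 * (cos a * cos b + sin a * sin b)"
      by (simp add: power2_eq_square algebra_simps)
    also have "\<dots> = 2 - 2 * cos (a - b)" by (simp add: cos_diff)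
    finally show ?thesis .
  qed
  also have "cos (a - b) = 1 - 2 * sin ((a-b)/2)^2"
  proof -
    have "a - b = 2 * ((a-b)/2)" by simp
    hence "cos (a - b) = cos (2 * ((a-b)/2))" by metis
    thus ?thesis by (simp only: cos_double_sin)
  qed
  finally have "(cmod (cis a - cis b))^2 = 4 * (sin ((a - b)/2))^2"
    by simp
  also have "\<dots> = (2 * \<bar>sin ((a - b)/2)\<bar>)^2" by (simp add: power_mult_distrib)
  finally show ?thesis using power2_eq_iff_nonneg[of "cmod (cis a - cis b)" "2 * \<bar>sin ((a - b)/2)\<bar>"] by simp
qed
lemma circ_close:
  assumes "t \<in> {0..1}" "w \<in> {0..1::real}" "cmod (cis (2*pi*t) - cis (2*pi*w)) \<le> 2 * eps"
  shows "\<bar>t - w\<bar> \<le> eps/2 \<or> \<bar>t - w\<bar> \<ge> 1 - eps/2"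
proof -
  define x where "x = \<bar>t - w\<bar>"
  have x: "0 \<le> x" "x \<le> 1" using assms(1,2) by (auto simp: x_def)
  have "\<bar>sin ((2*pi*t - 2*pi*w)/2)\<bar> \<le> eps" using assms(3) chord by simp
  moreover have "\<bar>sin ((2*pi*t - 2*pi*w)/2)\<bar> = sin (pi * x)"
  proof -
    have "(2*pi*t - 2*pi*w)/2 = pi * (t - w)" by (simp add: field_simps)
    moreover have "\<bar>sin (pi * (t - w))\<bar> = \<bar>sin (pi * x)\<bar>"
    proof (cases "t \<ge> w")
      case True thus ?thesis by (simp add: x_def)
    next
      case False
      hence "x = w - t" by (simp add: x_def)
      moreover have "pi*(t-w) = - (pi*(w-t))" by (simp add: algebra_simps)
      ultimately show ?thesis by (simp only: sin_minus abs_minus_cancel)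
    qed
    moreover have "sin (pi * x) \<ge> 0" using x by (intro sin_ge_zero) auto
    ultimately show ?thesis by simp
  qed
  ultimately have sx: "sin (pi * x) \<le> eps" by simp
  show ?thesis
  proof (cases "x \<le> 1/2")
    case True
    have "2 * (pi * x) / pi \<le> sin (pi * x)" using x True by (intro jordan) auto
    hence "2 * x \<le> eps" using sx by simp
    thus ?thesis unfolding x_def[symmetric] by simp
  next
    case False
    have "sin (pi * x) = sin (pi * (1 - x))" by (simp add: algebra_simps sin_diff)
    moreover have "2 * (pi * (1 - x)) / pi \<le> sin (pi * (1 - x))" using x False by (intro jordan) auto
    ultimately have "2 * (1 - x) \<le> eps" using sx by simp
    thus ?thesis unfolding x_def[symmetric] by simp
  qed
qed

lemma root_cover:
  assumes "eps \<ge> 0"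
  shows "\<exists>B. compact B \<and> measure lborel B \<le> 2 * eps \<and>
           {t\<in>{0..1::real}. cmod (cis (2*pi*t) - r) \<le> eps} \<subseteq> B"
proof (cases "{t\<in>{0..1::real}. cmod (cis (2*pi*t) - r) \<le> eps} = {}")
  case True thus ?thesis using assms by (intro exI[of _ "{}"]) auto
next
  case False
  then obtain t0 where t0: "t0 \<in> {0..1}" "cmod (cis (2*pi*t0) - r) \<le> eps" by auto
  define B where "B = {t0-eps/2..t0+eps/2} \<union> {1-eps/2..1} \<union> {0..eps/2}"
  have "compact B" unfolding B_def by (intro compact_Un compact_Icc)
  moreover have "measure lborel B \<le> 2 * eps"
  proof -
    have "measure lborel B \<le> measure lborel ({t0-eps/2..t0+eps/2} \<union> {1-eps/2..1}) + measure lborel {0..eps/2}"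
      unfolding B_def by (intro measure_Un_le) auto
    also have "\<dots> \<le> measure lborel {t0-eps/2..t0+eps/2} + measure lborel {1-eps/2..1} + measure lborel {0..eps/2}"
      by (intro add_right_mono measure_Un_le) auto
    also have "\<dots> = 2 * eps" using assms by simp
    finally show ?thesis .
  qed
  moreover have "{t\<in>{0..1::real}. cmod (cis (2*pi*t) - r) \<le> eps} \<subseteq> B"
  proof
    fix t assume t: "t \<in> {t\<in>{0..1::real}. cmod (cis (2*pi*t) - r) \<le> eps}"
    have "cmod (cis (2*pi*t) - cis (2*pi*t0)) \<le> cmod (cis (2*pi*t) - r) + cmod (cis (2*pi*t0) - r)"
      using norm_triangle_ineq4[of "cis (2*pi*t) - r" "cis (2*pi*t0) - r"] by simp
    also have "\<dots> \<le> 2 * eps" using t t0 by simp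
    finally have cc: "\<bar>t - t0\<bar> \<le> eps/2 \<or> \<bar>t - t0\<bar> \<ge> 1 - eps/2"
      using circ_close t t0 by blast
    have bb: "0 \<le> t" "t \<le> 1" "0 \<le> t0" "t0 \<le> 1" using t t0 by auto
    have "t \<in> {t0-eps/2..t0+eps/2} \<or> t \<in> {1-eps/2..1} \<or> t \<in> {0..eps/2}"
    proof (cases "t \<le> t0")
      case True
      hence "\<bar>t - t0\<bar> = t0 - t" by simp
      thus ?thesis using cc bb by (smt (verit) atLeastAtMost_iff)
    next
      case False
      hence "\<bar>t - t0\<bar> = t - t0" by simp
      thus ?thesis using cc bb by (smt (verit) atLeastAtMost_iff)
    qed
    thus "t \<in> B" unfolding B_def by blast
  qed
  ultimately show ?thesis by blast
qed
lemma lp_setup: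
  fixes c :: "int \<Rightarrow> complex"
  assumes "laurent_poly c" and "c \<noteq> (\<lambda>_. 0)"
  shows "\<exists>root. lead c \<noteq> 0 \<and> (\<forall>t. cmod (leval c (cis (2*pi*t))) =
            cmod (lead c) * (\<Prod>i<wd c. cmod (cis (2*pi*t) - root i)))"
proof -
  have fin: "finite (lsupp c)" using assms(1) by (simp add: laurent_poly_def lsupp_def)
  have ne: "lsupp c \<noteq> {}" using assms(2) by (auto simp: lsupp_def)
  define m where "m = ldeg_min c"
  define M where "M = ldeg_max c"
  have mM: "m \<in> lsupp c" "M \<in> lsupp c" "\<And>n. n \<in> lsupp c \<Longrightarrow> m \<le> n \<and> n \<le> M"
    using fin ne by (auto simp: m_def M_def ldeg_min_def ldeg_max_def)
  define d where "d = wd c"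
  have mleM: "m \<le> M" using mM by auto
  have dM: "M = m + int d" using mleM by (simp add: d_def wd_def m_def M_def)
  have lc: "lead c = c M" "c M \<noteq> 0" using mM by (auto simp: lead_def M_def lsupp_def)
  define Q where "Q = (\<Sum>k\<le>d. monom (c (m + int k)) k)"
  have coeffQ: "coeff Q k = (if k \<le> d then c (m + int k) else 0)" for k
    by (simp add: Q_def coeff_sum coeff_monom)
  have degQ: "degree Q = d"
  proof (rule le_antisym)
    show "degree Q \<le> d" by (rule degree_le) (simp add: coeffQ)
    show "d \<le> degree Q" by (rule le_degree) (use lc dM in \<open>simp add: coeffQ\<close>)
  qed
  have lcQ: "lead_coeff Q = lead c" using degQ lc dM by (simp add: coeffQ)
  have eval: "leval c z = z powi m * poly Q z" if z: "z \<noteq> 0" for z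
  proof -
    have "leval c z = (\<Sum>n\<in>{m..M}. c n * z powi n)"
      unfolding leval_def
      by (rule sum.mono_neutral_left) (use mM in \<open>auto simp: lsupp_def\<close>)
    also have "{m..M} = (\<lambda>k. m + int k) ` {..d}"
    proof -
      have "n \<in> (\<lambda>k. m + int k) ` {..d}" if "n \<in> {m..M}" for n
        using that dM by (intro image_eqI[of _ _ "nat (n - m)"]) auto
      thus ?thesis using dM by auto
    qed
    also have "(\<Sum>n\<in>(\<lambda>k. m + int k) ` {..d}. c n * z powi n) = (\<Sum>k\<le>d. c (m + int k) * z powi (m + int k))"
      by (subst sum.reindex) (auto simp: inj_on_def)
    also have "\<dots> = (\<Sum>k\<le>d. z powi m * (c (m + int k) * z ^ k))"
      using z by (intro sum.cong) (auto simp: power_int_add)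
    also have "\<dots> = z powi m * poly Q z"
      by (simp add: Q_def poly_sum poly_monom sum_distrib_left)
    finally show ?thesis .
  qed
  obtain root where rt: "smult (lead_coeff Q) (\<Prod>i<degree Q. [:-root i, 1:]) = Q"
    by (rule complex_poly_decompose')
  have polyQ: "poly Q z = lead c * (\<Prod>i<d. z - root i)" for z
  proof -
    have "poly Q z = poly (smult (lead_coeff Q) (\<Prod>i<degree Q. [:-root i, 1:])) z" using rt by simp
    also have "\<dots> = lead c * (\<Prod>i<d. z - root i)" using lcQ degQ by (simp add: poly_prod)
    finally show ?thesis .
  qed
  have "cmod (leval c (cis (2*pi*t))) = cmod (lead c) * (\<Prod>i<d. cmod (cis (2*pi*t) - root i))" for t
  proof -
    have "cis (2*pi*t) \<noteq> 0" by simp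
    hence "leval c (cis (2*pi*t)) = cis (2*pi*t) powi m * (lead c * (\<Prod>i<d. cis (2*pi*t) - root i))"
      using eval polyQ by simp
    thus ?thesis by (simp add: norm_mult prod_norm norm_power_int)
  qed
  thus ?thesis using lc d_def by auto
qed

lemma const_ge2: "2 \<le> 8 * sqrt 3 / sqrt 47"
proof -
  have "sqrt (4*47) \<le> sqrt (64 * 3)" by (rule real_sqrt_le_mono) simp
  hence "sqrt 4 * sqrt 47 \<le> sqrt 64 * sqrt 3" by (simp only: real_sqrt_mult)
  moreover have "sqrt 4 = (2::real)" by (rule real_sqrt_unique) simp_all
  moreover have "sqrt 64 = (8::real)" by (rule real_sqrt_unique) simp_all
  ultimately have "2 * sqrt 47 \<le> 8 * sqrt 3" by simp
  thus ?thesis by (simp add: pos_le_divide_eq)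
qed

theorem lemma2p3:
  fixes c :: "int \<Rightarrow> complex"
  assumes "laurent_poly c" and "c \<noteq> (\<lambda>_. 0)"
  shows "(wd c = 0 \<longrightarrow>
            (\<forall>l::real. 0 \<le> l \<and> l < cmod (lead c) \<longrightarrow> spec_density c l = 0) \<and>
            (\<forall>l::real. l \<ge> cmod (lead c) \<longrightarrow> spec_density c l = 1))
       \<and> (wd c \<ge> 1 \<longrightarrow>
            (\<forall>l::real. 0 \<le> l \<longrightarrow>
               spec_density c l \<le> 8 * sqrt 3 / sqrt 47 * real (wd c)
                 * (l / cmod (lead c)) powr (1 / real (wd c))))"
proof -
  obtain root where lc0: "lead c \<noteq> 0" and
    nrm: "\<And>t. cmod (leval c (cis (2*pi*t))) = cmod (lead c) * (\<Prod>i<wd c. cmod (cis (2*pi*t) - root i))"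
    using lp_setup[OF assms] by blast
  define d where "d = wd c"
  define a where "a = cmod (lead c)"
  have a0: "a > 0" using lc0 by (simp add: a_def)
  have part1: "(\<forall>l::real. 0 \<le> l \<and> l < a \<longrightarrow> spec_density c l = 0) \<and>
            (\<forall>l::real. l \<ge> a \<longrightarrow> spec_density c l = 1)" if "d = 0"
  proof -
    have "spec_density c l = measure lborel {t \<in> {0..1::real}. a \<le> l}" for l
      unfolding spec_density_def using nrm that by (simp add: d_def a_def)
    moreover have "{t \<in> {0..1::real}. a \<le> l} = (if a \<le> l then {0..1} else {})" for l
      by auto
    ultimately have "spec_density c l = (if a \<le> l then 1 else 0)" for l
      by (simp del: atLeastAtMost_iff)
    thus ?thesis by auto
  qed
  have part2: "spec_density c l \<le> 8 * sqrt 3 / sqrt 47 * real d * (l / a) powr (1 / real d)"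
    if d1: "d \<ge> 1" and l0: "0 \<le> l" for l
  proof -
    define eps where "eps = (l / a) powr (1 / real d)"
    have eps0: "eps \<ge> 0" by (simp add: eps_def)
    have epsd: "eps ^ d = l / a"
    proof (cases "l = 0")
      case True thus ?thesis using d1 by (simp add: eps_def)
    next
      case False
      hence "l / a \<noteq> 0" using a0 by simp
      hence "eps ^ d = (l/a) powr (real d * (1 / real d))" unfolding eps_def by (rule powr_power)
      also have "\<dots> = l / a" using d1 l0 a0 by simp
      finally show ?thesis .
    qed
    have "\<forall>i. \<exists>B. compact B \<and> measure lborel B \<le> 2 * eps \<and>
           {t\<in>{0..1::real}. cmod (cis (2*pi*t) - root i) \<le> eps} \<subseteq> B"
      using root_cover[OF eps0] by blast
    from choice[OF this] obtain B where B: "\<And>i. compact (B i)" "\<And>i. measure lborel (B i) \<le> 2 * eps"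
      "\<And>i. {t\<in>{0..1::real}. cmod (cis (2*pi*t) - root i) \<le> eps} \<subseteq> B i" by blast
    define S where "S = {t \<in> {0..1::real}. cmod (leval c (cis (2*pi*t))) \<le> l}"
    have sub: "S \<subseteq> (\<Union>i<d. B i)"
    proof
      fix t assume t: "t \<in> S"
      show "t \<in> (\<Union>i<d. B i)"
      proof (rule ccontr)
        assume "t \<notin> (\<Union>i<d. B i)"
        hence gt: "eps < cmod (cis (2*pi*t) - root i)" if "i < d" for i
          using B(3)[of i] t that unfolding S_def by force
        have "(\<Prod>i<d. eps) < (\<Prod>i<d. cmod (cis (2*pi*t) - root i))"
        proof (rule prod_mono_strict[of 0])
          show "0 \<in> {..<d}" using d1 by simp
          show "eps < cmod (cis (2*pi*t) - root 0)" using gt d1 by simp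
          show "finite {..<d}" by simp
          show "0 \<le> eps \<and> eps \<le> cmod (cis (2*pi*t) - root i)" if "i \<in> {..<d}" for i
            using gt[of i] that eps0 by simp
          show "0 < cmod (cis (2*pi*t) - root i)" if "i \<in> {..<d}" for i
            using gt[of i] that eps0 by (meson lessThan_iff le_less_trans)
        qed
        hence "eps ^ d < (\<Prod>i<d. cmod (cis (2*pi*t) - root i))" by simp
        hence "l / a < (\<Prod>i<d. cmod (cis (2*pi*t) - root i))" using epsd by simp
        hence "a * (l / a) < a * (\<Prod>i<d. cmod (cis (2*pi*t) - root i))"
          using a0 by (rule mult_strict_left_mono)
        hence "l < cmod (leval c (cis (2*pi*t)))" using a0 nrm[of t] by (simp add: a_def d_def)
        thus False using t by (simp add: S_def)
      qed
    qed
    have cU: "compact (\<Union>i<d. B i)" using B(1) by (intro compact_UN) auto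
    have "spec_density c l = measure lborel S" by (simp add: spec_density_def S_def)
    also have "\<dots> \<le> measure lborel (\<Union>i<d. B i)"
    proof (cases "S \<in> sets lborel")
      case True thus ?thesis using sub cU by (intro measure_mono_fmeasurable fmeasurable_compact)
    next
      case False thus ?thesis by (simp add: measure_notin_sets)
    qed
    also have "\<dots> \<le> (\<Sum>i<d. measure lborel (B i))"
      using B(1) by (intro measure_UNION_le) (auto intro: borel_compact)
    also have "\<dots> \<le> (\<Sum>i<d. 2 * eps)" using B(2) by (intro sum_mono) auto
    also have "\<dots> = 2 * real d * eps" by simp
    also have "\<dots> \<le> 8 * sqrt 3 / sqrt 47 * real d * eps"
      using const_ge2 eps0 by (intro mult_right_mono) auto
    finally show ?thesis by (simp add: eps_def)
  qed
  show ?thesis using part1 part2 unfolding d_def a_def by auto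
qed
end
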